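(* If $\mathcal{H}$ is a Hilbert space with $\dim\mathcal{H}>2$, then the spectral sheaf $p:E\to\mathcal{W}$ has no global sections, i.e. there is no continuous map $\tau:\mathcal{W}\to E$ with $p\circ\tau=1_{\mathcal{W}}$.
   Context: Let $L(\mathcal{H})$ be the complete orthomodular lattice of closed subspaces of the (complex) Hilbert space $\mathcal{H}$ ordered by inclusion, $\mathcal{W}$ the family of all Boolean subalgebras of $L(\mathcal{H})$ ordered by inclusion, and $\mathbf{2}$ the two-element Boolean algebra. For a poset, the topology used has as open sets exactly the decreasing (downward closed) subsets; $\mathcal{W}$ carries this topology. Let $E=\{(W,f): W\in\mathcal{W},\ f:W\to\mathbf{2}\text{ a Boolean homomorphism}\}$, ordered by $(W_1,f_1)\le(W_2,f_2)$ iff $W_1\subseteq W_2$ and $f_1=f_2|_{W_1}$, with the topology of decreasing sets. The spectral sheaf is $p:E\to\mathcal{W}$, $p(W,f)=W$. *)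

theory Defs
  imports "HOL-Analysis.Analysis" "HOL-Library.FuncSet"
begin

text \<open>A complex Hilbert space is modelled as a complete real normed vector type 'a
  together with a complex scalar multiplication smul (extending the real one) and a
  complex inner product ip (conjugate-linear in the first argument) inducing the norm.
  The topology and completeness are those of the norm.\<close>

definition complex_hilbert ::
  "(complex \<Rightarrow> 'a::{real_normed_vector, complete_space} \<Rightarrow> 'a) \<Rightarrow> ('a \<Rightarrow> 'a \<Rightarrow> complex) \<Rightarrow> bool" where
  "complex_hilbert smul ip \<longleftrightarrow>
     (\<forall>a b x. smul (a + b) x = smul a x + smul b x) \<and>
     (\<forall>a x y. smul a (x + y) = smul a x + smul a y) \<and>
     (\<forall>a b x. smul (a * b) x = smul a (smul b x)) \<and>
     (\<forall>x. smul 1 x = x) \<and>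
     (\<forall>r x. smul (complex_of_real r) x = scaleR r x) \<and>
     (\<forall>x y z. ip (x + y) z = ip x z + ip y z) \<and>
     (\<forall>c x y. ip (smul c x) y = cnj c * ip x y) \<and>
     (\<forall>x y. ip y x = cnj (ip x y)) \<and>
     (\<forall>x. norm x = sqrt (Re (ip x x)))"

definition dim_gt_2 :: "(complex \<Rightarrow> 'a::real_normed_vector \<Rightarrow> 'a) \<Rightarrow> bool" where
  "dim_gt_2 smul \<longleftrightarrow> (\<exists>u v w. \<forall>a b c.
      smul a u + smul b v + smul c w = 0 \<longrightarrow> a = 0 \<and> b = 0 \<and> c = 0)"

definition closed_subspace :: "(complex \<Rightarrow> 'a::real_normed_vector \<Rightarrow> 'a) \<Rightarrow> 'a set \<Rightarrow> bool" where
  "closed_subspace smul S \<longleftrightarrow> 0 \<in> S \<and> (\<forall>x\<in>S. \<forall>y\<in>S. x + y \<in> S) \<and>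
      (\<forall>c. \<forall>x\<in>S. smul c x \<in> S) \<and> closed S"

definition LH :: "(complex \<Rightarrow> 'a::real_normed_vector \<Rightarrow> 'a) \<Rightarrow> 'a set set" where
  "LH smul = {S. closed_subspace smul S}"

text \<open>Lattice operations of L(H): meet is intersection, join is the closed linear span of
  the union (closure of the sum), orthocomplement w.r.t. the inner product.\<close>
definition sjoin :: "'a::real_normed_vector set \<Rightarrow> 'a set \<Rightarrow> 'a set" where
  "sjoin S T = closure {x + y | x y. x \<in> S \<and> y \<in> T}"

definition orth :: "('a \<Rightarrow> 'a \<Rightarrow> complex) \<Rightarrow> 'a set \<Rightarrow> 'a set" where
  "orth ip S = {x. \<forall>y\<in>S. ip y x = 0}"

text \<open>Boolean subalgebras of L(H): sub-ortholattices (containing 0 and H, closed under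
  meet, join and orthocomplement) which are distributive, hence Boolean algebras.\<close>
definition bool_subalgebras ::
  "(complex \<Rightarrow> 'a::real_normed_vector \<Rightarrow> 'a) \<Rightarrow> ('a \<Rightarrow> 'a \<Rightarrow> complex) \<Rightarrow> 'a set set set" where
  "bool_subalgebras smul ip = {W. W \<subseteq> LH smul \<and> {0} \<in> W \<and> UNIV \<in> W \<and>
      (\<forall>a\<in>W. \<forall>b\<in>W. a \<inter> b \<in> W) \<and>
      (\<forall>a\<in>W. \<forall>b\<in>W. sjoin a b \<in> W) \<and>
      (\<forall>a\<in>W. orth ip a \<in> W) \<and>
      (\<forall>a\<in>W. \<forall>b\<in>W. \<forall>c\<in>W. a \<inter> sjoin b c = sjoin (a \<inter> b) (a \<inter> c))}"

text \<open>Boolean homomorphisms W \<rightarrow> 2 (2 = bool), represented extensionally on W.\<close>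
definition bool_hom ::
  "('a \<Rightarrow> 'a \<Rightarrow> complex) \<Rightarrow> 'a::real_normed_vector set set \<Rightarrow> ('a set \<Rightarrow> bool) \<Rightarrow> bool" where
  "bool_hom ip W f \<longleftrightarrow> f \<in> extensional W \<and> f {0} = False \<and> f UNIV = True \<and>
      (\<forall>a\<in>W. \<forall>b\<in>W. f (a \<inter> b) = (f a \<and> f b)) \<and>
      (\<forall>a\<in>W. \<forall>b\<in>W. f (sjoin a b) = (f a \<or> f b)) \<and>
      (\<forall>a\<in>W. f (orth ip a) = (\<not> f a))"

definition spectral_E ::
  "(complex \<Rightarrow> 'a::real_normed_vector \<Rightarrow> 'a) \<Rightarrow> ('a \<Rightarrow> 'a \<Rightarrow> complex)
     \<Rightarrow> ('a set set \<times> ('a set \<Rightarrow> bool)) set" where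
  "spectral_E smul ip = {(W, f). W \<in> bool_subalgebras smul ip \<and> bool_hom ip W f}"

definition sheaf_le :: "('a set set \<times> ('a set \<Rightarrow> bool)) \<Rightarrow> ('a set set \<times> ('a set \<Rightarrow> bool)) \<Rightarrow> bool" where
  "sheaf_le p q \<longleftrightarrow> fst p \<subseteq> fst q \<and> (\<forall>a\<in>fst p. snd p a = snd q a)"

definition down_closed :: "'b set \<Rightarrow> ('b \<Rightarrow> 'b \<Rightarrow> bool) \<Rightarrow> 'b set \<Rightarrow> bool" where
  "down_closed S le U \<longleftrightarrow> U \<subseteq> S \<and> (\<forall>x\<in>U. \<forall>y\<in>S. le y x \<longrightarrow> y \<in> U)"

definition downset_topology :: "'b set \<Rightarrow> ('b \<Rightarrow> 'b \<Rightarrow> bool) \<Rightarrow> 'b topology" where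
  "downset_topology S le = topology (down_closed S le)"

lemma istopology_down_closed: "istopology (down_closed S le)"
  unfolding istopology_def down_closed_def by blast

lemma openin_downset_topology:
  "openin (downset_topology S le) U \<longleftrightarrow> down_closed S le U"
  unfolding downset_topology_def by (simp only: topology_inverse'[OF istopology_down_closed])

lemma topspace_downset_topology: "topspace (downset_topology S le) = S"
  unfolding topspace_def openin_downset_topology down_closed_def by blast

end

theory Submission
  imports Defs
begin

locale chs =
  fixes smul :: "complex \<Rightarrow> 'a::{real_normed_vector, complete_space} \<Rightarrow> 'a"
    and ip :: "'a \<Rightarrow> 'a \<Rightarrow> complex"
  assumes H: "complex_hilbert smul ip"
begin

lemma HH: "(\<forall>a b x. smul (a + b) x = smul a x + smul b x) \<and>
     (\<forall>a x y. smul a (x + y) = smul a x + smul a y) \<and>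
     (\<forall>a b x. smul (a * b) x = smul a (smul b x)) \<and>
     (\<forall>x. smul 1 x = x) \<and>
     (\<forall>r x. smul (complex_of_real r) x = scaleR r x) \<and>
     (\<forall>x y z. ip (x + y) z = ip x z + ip y z) \<and>
     (\<forall>c x y. ip (smul c x) y = cnj c * ip x y) \<and>
     (\<forall>x y. ip y x = cnj (ip x y)) \<and>
     (\<forall>x. norm x = sqrt (Re (ip x x)))" using H unfolding complex_hilbert_def by assumption

lemmas smul_add_left = HH[THEN conjunct1, rule_format]
lemmas smul_add_right = HH[THEN conjunct2, THEN conjunct1, rule_format]
lemmas smul_mult = HH[THEN conjunct2, THEN conjunct2, THEN conjunct1, rule_format]
lemmas smul_one[simp] = HH[THEN conjunct2, THEN conjunct2, THEN conjunct2, THEN conjunct1, rule_format]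
lemmas smul_real = HH[THEN conjunct2, THEN conjunct2, THEN conjunct2, THEN conjunct2, THEN conjunct1, rule_format]
lemmas ip_add_left = HH[THEN conjunct2, THEN conjunct2, THEN conjunct2, THEN conjunct2, THEN conjunct2, THEN conjunct1, rule_format]
lemmas ip_smul_left[simp] = HH[THEN conjunct2, THEN conjunct2, THEN conjunct2, THEN conjunct2, THEN conjunct2, THEN conjunct2, THEN conjunct1, rule_format]
lemmas ip_sym = HH[THEN conjunct2, THEN conjunct2, THEN conjunct2, THEN conjunct2, THEN conjunct2, THEN conjunct2, THEN conjunct2, THEN conjunct1, rule_format]
lemmas norm_ip = HH[THEN conjunct2, THEN conjunct2, THEN conjunct2, THEN conjunct2, THEN conjunct2, THEN conjunct2, THEN conjunct2, THEN conjunct2, rule_format]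

lemma smul_zero_left[simp]: "smul 0 x = 0"
  using smul_real[of 0 x] by simp
lemma smul_zero_right[simp]: "smul a 0 = 0"
  using smul_add_right[of a 0 0] by simp
lemma smul_minus_right: "smul a (- x) = - smul a x"
  proof -
  have "smul a x + smul a (-x) = 0" using smul_add_right[of a x "-x"] by simp
  from add.inverse_unique[OF this] show ?thesis by simp
qed
lemma smul_diff_right: "smul a (x - y) = smul a x - smul a y"
  using smul_add_right[of a x "-y"] smul_minus_right[of a y] by simp
lemma smul_minus_left: "smul (- a) x = - smul a x"
  proof -
  have "smul a x + smul (-a) x = 0" using smul_add_left[of a "-a" x] by simp
  from add.inverse_unique[OF this] show ?thesis by simp
qed
lemma smul_diff_left: "smul (a - b) x = smul a x - smul b x"
  using smul_add_left[of a "-b" x] smul_minus_left[of b x] by simp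
lemma smul_sum_right: "smul a (sum f F) = (\<Sum>i\<in>F. smul a (f i))"
  by (induction F rule: infinite_finite_induct) (auto simp: smul_add_right)
lemma smul_sum_left: "smul (sum f F) x = (\<Sum>i\<in>F. smul (f i) x)"
  by (induction F rule: infinite_finite_induct) (auto simp: smul_add_left)

lemma ip_conj: "ip x y = cnj (ip y x)"
  using ip_sym[of y x] by simp
lemma ip_add_right: "ip x (y + z) = ip x y + ip x z"
  using ip_conj[of x "y+z"] ip_conj[of x y] ip_conj[of x z] ip_add_left[of y z x] by simp
lemma ip_smul_right[simp]: "ip x (smul c y) = c * ip x y"
  using ip_conj[of x "smul c y"] ip_conj[of x y] ip_smul_left[of c y x] by simp
lemma ip_zero_left[simp]: "ip 0 y = 0"
  using ip_add_left[of 0 0 y] by simp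
lemma ip_zero_right[simp]: "ip x 0 = 0"
  using ip_add_right[of x 0 0] by simp
lemma ip_minus_left: "ip (- x) y = - ip x y"
  proof -
  have "ip x y + ip (-x) y = 0" using ip_add_left[of x "-x" y] by simp
  from add.inverse_unique[OF this] show ?thesis by simp
qed
lemma ip_minus_right: "ip x (- y) = - ip x y"
  proof -
  have "ip x y + ip x (-y) = 0" using ip_add_right[of x y "-y"] by simp
  from add.inverse_unique[OF this] show ?thesis by simp
qed
lemma ip_diff_left: "ip (x - y) z = ip x z - ip y z"
  using ip_add_left[of x "-y" z] ip_minus_left[of y z] by simp
lemma ip_diff_right: "ip x (y - z) = ip x y - ip x z"
  using ip_add_right[of x y "-z"] ip_minus_right[of x z] by simp
lemma ip_sum_right: "ip x (sum f F) = (\<Sum>i\<in>F. ip x (f i))"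
  by (induction F rule: infinite_finite_induct) (auto simp: ip_add_right)
lemma ip_sum_left: "ip (sum f F) x = (\<Sum>i\<in>F. ip (f i) x)"
  by (induction F rule: infinite_finite_induct) (auto simp: ip_add_left)
lemma ip_scaleR_right: "ip x (scaleR r y) = complex_of_real r * ip x y"
  using ip_smul_right[of x "complex_of_real r" y] by (simp add: smul_real)
lemma ip_scaleR_left: "ip (scaleR r x) y = complex_of_real r * ip x y"
  using ip_smul_left[of "complex_of_real r" x y] by (simp add: smul_real)

lemma ip_self_Im: "Im (ip x x) = 0"
  using ip_sym[of x x] by (simp add: complex_eq_iff)
lemma ip_self_Re: "Re (ip x x) = (norm x)^2"
proof -
  have "0 \<le> Re (ip x x)" using norm_ip[of x] norm_ge_zero[of x] real_sqrt_ge_0_iff by metis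
  then show ?thesis using norm_ip[of x] by simp
qed
lemma ip_self: "ip x x = complex_of_real ((norm x)^2)"
  using ip_self_Im[of x] ip_self_Re[of x] by (simp add: complex_eq_iff)
lemma ip_self_eq_0[simp]: "ip x x = 0 \<longleftrightarrow> x = 0"
  by (simp add: ip_self)

lemma norm_smul: "norm (smul c x) = cmod c * norm x"
proof -
  have "(norm (smul c x))^2 = Re (ip (smul c x) (smul c x))" by (rule ip_self_Re[symmetric])
  also have "\<dots> = Re ((c * cnj c) * ip x x)" by (simp add: algebra_simps)
  also have "\<dots> = (cmod c)^2 * (norm x)^2"
    by (simp only: ip_self complex_norm_square[symmetric] of_real_mult[symmetric] Re_complex_of_real)
  finally have "(norm (smul c x))^2 = (cmod c * norm x)^2" by (simp add: power_mult_distrib)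
  then show ?thesis by (simp add: power2_eq_iff_nonneg)
qed

lemma cauchy_schwarz: "cmod (ip x y) \<le> norm x * norm y"
proof (cases "x = 0")
  case True then show ?thesis by simp
next
  case False
  define n where "n = (norm x)^2"
  have n: "n > 0" using False by (simp add: n_def)
  define p where "p = ip x y"
  define t where "t = p / complex_of_real n"
  define z where "z = y - smul t x"
  have "ip z z = ip y y - t * ip y x - cnj t * ip x y + cnj t * t * ip x x"
    by (simp add: z_def ip_diff_left ip_diff_right algebra_simps)
  also have "\<dots> = ip y y - complex_of_real ((cmod p)^2 / n)"
  proof -
    have ipyx: "ip y x = cnj p" by (simp add: p_def ip_sym[of y x])
    have ipxx: "ip x x = complex_of_real n" by (simp add: n_def ip_self)
    have pp: "complex_of_real ((cmod p)^2) = p * cnj p" by (rule complex_norm_square)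
    have pp2: "(complex_of_real (cmod p))^2 = p * cnj p" using pp by simp
    have pp3: "complex_of_real (cmod p) * complex_of_real (cmod p) = p * cnj p" using pp2 by (simp add: power2_eq_square)
    have "t * cnj p = complex_of_real ((cmod p)^2 / n)"
      using n by (simp add: t_def pp pp2)
    moreover have "cnj t * p = complex_of_real ((cmod p)^2 / n)"
      using n by (simp add: t_def pp pp2 mult.commute)
    moreover have "cnj t * t * complex_of_real n = complex_of_real ((cmod p)^2 / n)"
      using n by (simp add: t_def pp pp2 pp3 field_simps power2_eq_square)
    ultimately show ?thesis by (simp add: ipyx ipxx p_def[symmetric])
  qed
  finally have "Re (ip z z) = (norm y)^2 - (cmod p)^2 / n" by (simp add: ip_self_Re)
  moreover have "Re (ip z z) \<ge> 0" by (simp add: ip_self_Re)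
  ultimately have e: "n * Re (ip z z) + (cmod p)^2 = n * (norm y)^2" "0 \<le> Re (ip z z)" using n by (simp_all add: field_simps)
  have "n * Re (ip z z) \<ge> 0" using n e(2) by simp
  then have "(cmod p)^2 \<le> n * (norm y)^2" using e(1) by linarith
  then have "(cmod p)^2 \<le> (norm x * norm y)^2" by (simp add: n_def power_mult_distrib)
  then show ?thesis by (simp add: p_def power2_le_iff_abs_le)
qed

lemma bounded_linear_ip: "bounded_linear (ip y)"
proof (rule bounded_linear_intro[where K="norm y"])
  show "ip y (a + b) = ip y a + ip y b" for a b by (rule ip_add_right)
  show "ip y (scaleR r a) = scaleR r (ip y a)" for r a by (simp add: ip_scaleR_right scaleR_conv_of_real)
  show "norm (ip y a) \<le> norm a * norm y" for a using cauchy_schwarz[of y a] by (simp add: mult.commute)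
qed

lemma continuous_ip: "continuous_on UNIV (ip y)"
  using bounded_linear_ip linear_continuous_on by blast

lemma closed_subspace_orth: "closed_subspace smul (orth ip S)"
proof -
  have "closed {x. \<forall>y\<in>S. ip y x = 0}"
  proof -
    have "{x. \<forall>y\<in>S. ip y x = 0} = (\<Inter>y\<in>S. {x. ip y x = 0})" by auto
    moreover have "closed {x. ip y x = 0}" for y
      using closed_Collect_eq[OF continuous_ip[of y] continuous_on_const] by simp
    ultimately show ?thesis by auto
  qed
  then show ?thesis
    unfolding closed_subspace_def orth_def by (auto simp: ip_add_right)
qed

lemma orth_LH: "orth ip S \<in> LH smul"
  using closed_subspace_orth by (simp add: LH_def)

end

lemma summable_sq_bound:
  fixes f :: "'i \<Rightarrow> 'b::{real_normed_vector, complete_space}" and g :: "'i \<Rightarrow> real"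
  assumes gnn: "\<And>x. x \<in> A \<Longrightarrow> g x \<ge> 0" and gs: "g summable_on A"
    and bnd: "\<And>F. finite F \<Longrightarrow> F \<subseteq> A \<Longrightarrow> (norm (sum f F))^2 \<le> sum g F"
  shows "f summable_on A"
proof -
  from gs obtain L where lim: "(sum g \<longlongrightarrow> L) (finite_subsets_at_top A)"
    unfolding has_sum_def summable_on_def by blast
  have "\<exists>P. eventually P (finite_subsets_at_top A) \<and>
              (\<forall>F F'. P F \<and> P F' \<longrightarrow> dist (sum f F) (sum f F') < e)" if "e > 0" for e
  proof -
    define d where "d = (e/4)^2 / 2"
    define P where "P F \<longleftrightarrow> finite F \<and> F \<subseteq> A \<and> dist (sum g F) L < d" for F
    have "d > 0" using that by (simp add: d_def)
    have ev_P: "eventually P (finite_subsets_at_top A)"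
      using lim
      by (auto simp add: P_def[abs_def] \<open>0 < d\<close> eventually_conj_iff eventually_finite_subsets_at_top_weakI tendsto_iff)
    moreover have "dist (sum f F1) (sum f F2) < e" if "P F1" and "P F2" for F1 F2
    proof -
      from ev_P
      obtain F' where "finite F'" and "F' \<subseteq> A" and P_sup_F': "finite F \<and> F \<supseteq> F' \<and> F \<subseteq> A \<Longrightarrow> P F" for F
        by atomize_elim (simp add: eventually_finite_subsets_at_top)
      define F where "F = F' \<union> F1 \<union> F2"
      have "finite F" and "F \<subseteq> A"
        using F_def P_def[abs_def] that \<open>finite F'\<close> \<open>F' \<subseteq> A\<close> by auto
      have PF: "P F"
        by (metis F_def \<open>F \<subseteq> A\<close> P_sup_F' \<open>finite F\<close> le_supE order_refl)
      have dist_F_subset: "dist (sum f F) (sum f Fx) < e/4" if Fx: "Fx \<subseteq> F" "P Fx" for Fx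
      proof -
        have fin: "finite Fx" using Fx \<open>finite F\<close> finite_subset by blast
        have dn: "dist (sum f F) (sum f Fx) = norm (sum f (F-Fx))"
          unfolding dist_norm using \<open>finite F\<close> Fx by (subst sum_diff) auto
        have f1: "(norm (sum f (F-Fx)))^2 \<le> sum g (F - Fx)"
          using bnd[of "F - Fx"] \<open>finite F\<close> \<open>F \<subseteq> A\<close> by auto
        have f2: "sum g (F - Fx) = sum g F - sum g Fx"
          using \<open>finite F\<close> Fx by (subst sum_diff) auto
        have f3: "sum g F - sum g Fx < 2 * d"
          using PF Fx(2) unfolding P_def dist_real_def by linarith
        have f4: "2 * d = (e/4)^2" by (simp add: d_def)
        have f5: "(norm (sum f (F-Fx)))^2 < 2*d" using le_less_trans[OF f1[unfolded f2] f3] .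
        have f6: "(dist (sum f F) (sum f Fx))^2 < (e/4)^2"
          unfolding dn using f5 unfolding f4 .
        show ?thesis
          by (rule power2_less_imp_less[OF f6]) (use \<open>e > 0\<close> in simp)
      qed
      have "dist (sum f F1) (sum f F2) \<le> dist (sum f F) (sum f F1) + dist (sum f F) (sum f F2)"
        by (rule dist_triangle3)
      also have "\<dots> < e/4 + e/4"
        by (intro add_strict_mono dist_F_subset that) (auto simp: F_def)
      also have "\<dots> \<le> e" using \<open>e > 0\<close> by simp
      finally show ?thesis .
    qed
    then show ?thesis
      using ev_P by blast
  qed
  then have "cauchy_filter (filtermap (sum f) (finite_subsets_at_top A))"
    by (simp add: cauchy_filter_metric_filtermap)
  moreover have "complete (UNIV::'b set)"
    by (meson Cauchy_convergent UNIV_I complete_def convergent_def)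
  ultimately obtain L' where "(sum f \<longlongrightarrow> L') (finite_subsets_at_top A)"
    using complete_uniform[where S=UNIV] by (force simp add: filterlim_def)
  then show ?thesis
    using summable_on_def has_sum_def by blast
qed

context chs begin

definition orthonormal :: "'a set \<Rightarrow> bool" where
  "orthonormal C \<longleftrightarrow> (\<forall>c\<in>C. ip c c = 1) \<and> (\<forall>c\<in>C. \<forall>d\<in>C. c \<noteq> d \<longrightarrow> ip c d = 0)"

definition complete_on :: "'a set \<Rightarrow> bool" where
  "complete_on C \<longleftrightarrow> orthonormal C \<and> (\<forall>x. (\<forall>c\<in>C. ip c x = 0) \<longrightarrow> x = 0)"

lemma cnj_mult_self: "cnj z * z = complex_of_real ((cmod z)^2)"
  using complex_norm_square[of z] by (simp add: mult.commute)

lemma orthonormal_subset: "orthonormal C \<Longrightarrow> D \<subseteq> C \<Longrightarrow> orthonormal D"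
  unfolding orthonormal_def subset_iff by (intro conjI ballI impI) (simp_all)

lemma ip_fin_comb:
  assumes "orthonormal C" "finite F" "F \<subseteq> C" "c \<in> C"
  shows "ip c (\<Sum>d\<in>F. smul (a d) d) = (if c \<in> F then a c else 0)"
proof -
  have "ip c (\<Sum>d\<in>F. smul (a d) d) = (\<Sum>d\<in>F. a d * ip c d)"
    by (simp add: ip_sum_right)
  also have "\<dots> = (\<Sum>d\<in>F. if d = c then a d else 0)"
    using assms unfolding orthonormal_def by (intro sum.cong) auto
  also have "\<dots> = (if c \<in> F then a c else 0)"
    using assms(2) by (simp add: sum.delta')
  finally show ?thesis .
qed

lemma ip_comb_self:
  assumes "orthonormal C" "finite F" "F \<subseteq> C"
  shows "ip (\<Sum>d\<in>F. smul (a d) d) (\<Sum>d\<in>F. smul (a d) d) = complex_of_real (\<Sum>d\<in>F. (cmod (a d))^2)"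
proof -
  have "ip (\<Sum>d\<in>F. smul (a d) d) (\<Sum>d\<in>F. smul (a d) d) = (\<Sum>e\<in>F. cnj (a e) * ip e (\<Sum>d\<in>F. smul (a d) d))"
    by (simp add: ip_sum_left)
  also have "\<dots> = (\<Sum>e\<in>F. cnj (a e) * a e)"
  proof (intro sum.cong refl)
    fix e assume "e \<in> F"
    then have "e \<in> C" using assms by auto
    then show "cnj (a e) * ip e (\<Sum>d\<in>F. smul (a d) d) = cnj (a e) * a e"
      using ip_fin_comb[OF assms \<open>e \<in> C\<close>] \<open>e \<in> F\<close> by simp
  qed
  also have "\<dots> = (\<Sum>e\<in>F. complex_of_real ((cmod (a e))^2))"
    by (intro sum.cong) (auto simp: cnj_mult_self)
  finally show ?thesis by simp
qed

lemma norm_comb: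
  assumes "orthonormal C" "finite F" "F \<subseteq> C"
  shows "(norm (\<Sum>d\<in>F. smul (a d) d))^2 = (\<Sum>d\<in>F. (cmod (a d))^2)"
  using ip_self_Re[of "\<Sum>d\<in>F. smul (a d) d"] ip_comb_self[OF assms, of a] by simp

lemma bessel_fin:
  assumes "orthonormal C" "finite F" "F \<subseteq> C"
  shows "(\<Sum>d\<in>F. (cmod (ip d x))^2) \<le> (norm x)^2"
proof -
  define s where "s = (\<Sum>d\<in>F. smul (ip d x) d)"
  define \<sigma> where "\<sigma> = (\<Sum>d\<in>F. (cmod (ip d x))^2)"
  have sx: "ip s x = complex_of_real \<sigma>"
  proof -
    have "ip s x = (\<Sum>d\<in>F. cnj (ip d x) * ip d x)" by (simp add: s_def ip_sum_left)
    also have "\<dots> = (\<Sum>d\<in>F. complex_of_real ((cmod (ip d x))^2))"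
      by (intro sum.cong) (auto simp: cnj_mult_self)
    finally show ?thesis by (simp add: \<sigma>_def)
  qed
  have xs: "ip x s = complex_of_real \<sigma>" using sx ip_conj[of x s] by simp
  have ss: "ip s s = complex_of_real \<sigma>" unfolding s_def \<sigma>_def by (rule ip_comb_self[OF assms])
  have "ip (x - s) (x - s) = ip x x - ip x s - ip s x + ip s s"
    by (simp add: ip_diff_left ip_diff_right)
  then have "Re (ip (x - s) (x - s)) = (norm x)^2 - \<sigma>"
    using xs sx ss by (simp add: ip_self_Re)
  moreover have "Re (ip (x - s) (x - s)) \<ge> 0" by (simp add: ip_self_Re)
  ultimately show ?thesis unfolding \<sigma>_def by linarith
qed

lemma coef_summable:
  assumes "orthonormal D"
  shows "(\<lambda>d. (cmod (ip d x))^2) summable_on D"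
proof (rule nonneg_bdd_above_summable_on)
  show "bdd_above (sum (\<lambda>d. (cmod (ip d x))^2) ` {F. F \<subseteq> D \<and> finite F})"
    using bessel_fin[OF assms] by (intro bdd_aboveI[where M="(norm x)^2"]) auto
qed auto

lemma proj_summable:
  assumes "orthonormal D"
  shows "(\<lambda>d. smul (ip d x) d) summable_on D"
proof (rule summable_sq_bound[where g="\<lambda>d. (cmod (ip d x))^2"])
  show "(\<lambda>d. (cmod (ip d x))^2) summable_on D" by (rule coef_summable[OF assms])
  show "(norm (sum (\<lambda>d. smul (ip d x) d) F))^2 \<le> (\<Sum>d\<in>F. (cmod (ip d x))^2)"
    if "finite F" "F \<subseteq> D" for F
    using norm_comb[OF assms that] by simp
qed auto

definition proj :: "'a set \<Rightarrow> 'a \<Rightarrow> 'a" where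
  "proj D x = infsum (\<lambda>d. smul (ip d x) d) D"

lemma ip_proj:
  assumes "orthonormal C" "D \<subseteq> C" "c \<in> C"
  shows "ip c (proj D x) = (if c \<in> D then ip c x else 0)"
proof -
  have oD: "orthonormal D" by (rule orthonormal_subset[OF assms(1,2)])
  have hs: "((\<lambda>d. smul (ip d x) d) has_sum proj D x) D"
    unfolding proj_def using proj_summable[OF oD] by simp
  have h2: "((\<lambda>d. ip c (smul (ip d x) d)) has_sum ip c (proj D x)) D"
    by (rule has_sum_bounded_linear[OF bounded_linear_ip hs])
  have h3: "((\<lambda>d. ip c (smul (ip d x) d)) has_sum (if c \<in> D then ip c x else 0)) D"
  proof (rule has_sum_finite_neutralI[where B="D \<inter> {c}"])
    show "ip c (smul (ip d x) d) = 0" if "d \<in> D - D \<inter> {c}" for d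
      using that assms unfolding orthonormal_def by auto
    have cc: "ip c c = 1" using assms(1,3) unfolding orthonormal_def by simp
    show "(if c \<in> D then ip c x else 0) = (\<Sum>d\<in>D \<inter> {c}. ip c (smul (ip d x) d))"
    proof (cases "c \<in> D")
      case True
      then have "D \<inter> {c} = {c}" by auto
      then show ?thesis using True cc by simp
    next
      case False
      then have "D \<inter> {c} = {}" by auto
      then show ?thesis using False by simp
    qed
  qed auto
  show ?thesis using has_sum_unique[OF h2 h3] .
qed

lemma complete_onD: "complete_on C \<Longrightarrow> (\<And>c. c \<in> C \<Longrightarrow> ip c x = 0) \<Longrightarrow> x = 0"
  unfolding complete_on_def by simp

lemma complete_on_orth: "complete_on C \<Longrightarrow> orthonormal C"
  unfolding complete_on_def by simp

lemma proj_eq: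
  assumes "complete_on C" "D \<subseteq> C" "\<And>c. c \<in> C - D \<Longrightarrow> ip c x = 0"
  shows "proj D x = x"
proof -
  have "x - proj D x = 0"
  proof (rule complete_onD[OF assms(1)])
    fix c assume "c \<in> C"
    then show "ip c (x - proj D x) = 0"
      using ip_proj[OF complete_on_orth[OF assms(1)] assms(2) \<open>c \<in> C\<close>, of x] assms(3)[of c]
      by (auto simp: ip_diff_right)
  qed
  then show ?thesis by simp
qed

lemma ip_proj_gen:
  assumes "orthonormal D"
  shows "ip y (proj D x) = infsum (\<lambda>d. ip d x * ip y d) D"
proof -
  have hs: "((\<lambda>d. smul (ip d x) d) has_sum proj D x) D"
    unfolding proj_def using proj_summable[OF assms] by simp
  have h2: "((\<lambda>d. ip y (smul (ip d x) d)) has_sum ip y (proj D x)) D"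
    by (rule has_sum_bounded_linear[OF bounded_linear_ip hs])
  then show ?thesis by (simp add: infsumI)
qed

end

context chs begin

definition Sset :: "'a set \<Rightarrow> ('a \<Rightarrow> 'i) \<Rightarrow> 'i set \<Rightarrow> 'a set" where
  "Sset C \<kappa> A = orth ip {c\<in>C. \<kappa> c \<notin> A}"

lemma mem_Sset: "x \<in> Sset C \<kappa> A \<longleftrightarrow> (\<forall>c\<in>C. \<kappa> c \<notin> A \<longrightarrow> ip c x = 0)"
  unfolding Sset_def orth_def by auto

lemma Sset_empty: "complete_on C \<Longrightarrow> Sset C \<kappa> {} = {0}"
  by (auto simp: mem_Sset set_eq_iff intro: complete_onD)

lemma Sset_all: "(\<And>c. c \<in> C \<Longrightarrow> \<kappa> c \<in> A) \<Longrightarrow> Sset C \<kappa> A = UNIV"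
  by (auto simp: mem_Sset set_eq_iff)

lemma Sset_Int: "Sset C \<kappa> A \<inter> Sset C \<kappa> B = Sset C \<kappa> (A \<inter> B)"
  by (auto simp: mem_Sset set_eq_iff)

lemma Sset_mono: "A \<subseteq> B \<Longrightarrow> Sset C \<kappa> A \<subseteq> Sset C \<kappa> B"
  by (auto simp: mem_Sset subset_iff)

lemma Sset_LH: "Sset C \<kappa> A \<in> LH smul"
  unfolding Sset_def by (rule orth_LH)

lemma Sset_subspace: "closed_subspace smul (Sset C \<kappa> A)"
  unfolding Sset_def by (rule closed_subspace_orth)

lemma orth_Sset:
  assumes cC: "complete_on C"
  shows "orth ip (Sset C \<kappa> A) = Sset C \<kappa> (-A)"
proof (intro set_eqI iffI)
  fix y assume y: "y \<in> orth ip (Sset C \<kappa> A)"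
  show "y \<in> Sset C \<kappa> (-A)"
    unfolding mem_Sset
  proof (intro ballI impI)
    fix c assume c: "c \<in> C" "\<kappa> c \<notin> - A"
    have "c \<in> Sset C \<kappa> A"
      unfolding mem_Sset using c complete_on_orth[OF cC] unfolding orthonormal_def by auto
    then show "ip c y = 0" using y unfolding orth_def by auto
  qed
next
  fix y assume y: "y \<in> Sset C \<kappa> (-A)"
  show "y \<in> orth ip (Sset C \<kappa> A)"
    unfolding orth_def
  proof (intro CollectI ballI)
    fix x assume x: "x \<in> Sset C \<kappa> A"
    define D where "D = {c\<in>C. \<kappa> c \<in> A}"
    have oD: "orthonormal D" by (rule orthonormal_subset[OF complete_on_orth[OF cC]]) (auto simp: D_def)
    have "proj D x = x"
      by (rule proj_eq[OF cC]) (use x in \<open>auto simp: D_def mem_Sset\<close>)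
    then have "ip y x = infsum (\<lambda>d. ip d x * ip y d) D"
      using ip_proj_gen[OF oD, of y x] by simp
    also have "\<dots> = 0"
    proof (rule infsum_0)
      fix d assume "d \<in> D"
      then have "ip d y = 0" using y by (auto simp: D_def mem_Sset)
      then show "ip d x * ip y d = 0" using ip_conj[of y d] by simp
    qed
    finally show "ip x y = 0" using ip_conj[of x y] by simp
  qed
qed

lemma sjoin_Sset:
  assumes cC: "complete_on C"
  shows "sjoin (Sset C \<kappa> A) (Sset C \<kappa> B) = Sset C \<kappa> (A \<union> B)"
proof
  have sub: "{x + y |x y. x \<in> Sset C \<kappa> A \<and> y \<in> Sset C \<kappa> B} \<subseteq> Sset C \<kappa> (A \<union> B)"
  proof
    fix z assume "z \<in> {x + y |x y. x \<in> Sset C \<kappa> A \<and> y \<in> Sset C \<kappa> B}"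
    then obtain x y where z: "z = x + y" "x \<in> Sset C \<kappa> A" "y \<in> Sset C \<kappa> B" by blast
    have "x \<in> Sset C \<kappa> (A \<union> B)" "y \<in> Sset C \<kappa> (A \<union> B)"
      using z(2) z(3) Sset_mono[of A "A \<union> B" C \<kappa>] Sset_mono[of B "A \<union> B" C \<kappa>] by blast+
    moreover have "\<forall>x\<in>Sset C \<kappa> (A \<union> B). \<forall>y\<in>Sset C \<kappa> (A \<union> B). x + y \<in> Sset C \<kappa> (A \<union> B)"
      using Sset_subspace[of C \<kappa> "A \<union> B"] unfolding closed_subspace_def by (elim conjE)
    ultimately show "z \<in> Sset C \<kappa> (A \<union> B)" unfolding z(1) by blast
  qed
  have cl: "closed (Sset C \<kappa> (A \<union> B))"
    using Sset_subspace[of C \<kappa> "A \<union> B"] unfolding closed_subspace_def by (elim conjE)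
  show "sjoin (Sset C \<kappa> A) (Sset C \<kappa> B) \<subseteq> Sset C \<kappa> (A \<union> B)"
    unfolding sjoin_def by (rule closure_minimal[OF sub cl])
next
  show "Sset C \<kappa> (A \<union> B) \<subseteq> sjoin (Sset C \<kappa> A) (Sset C \<kappa> B)"
  proof
    fix x assume x: "x \<in> Sset C \<kappa> (A \<union> B)"
    define D where "D = {c\<in>C. \<kappa> c \<in> A}"
    have oC: "orthonormal C" using complete_on_orth[OF cC] .
    have DC: "D \<subseteq> C" by (auto simp: D_def)
    define p where "p = proj D x"
    have ipp: "ip c p = (if \<kappa> c \<in> A then ip c x else 0)" if "c \<in> C" for c
      using ip_proj[OF oC DC that, of x] that unfolding p_def D_def by simp
    have p: "p \<in> Sset C \<kappa> A"
      unfolding mem_Sset using ipp by simp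
    have q: "x - p \<in> Sset C \<kappa> B"
      unfolding mem_Sset
    proof (intro ballI impI)
      fix c assume c: "c \<in> C" "\<kappa> c \<notin> B"
      show "ip c (x - p) = 0"
      proof (cases "\<kappa> c \<in> A")
        case True then show ?thesis using ipp[OF c(1)] by (simp add: ip_diff_right)
      next
        case False
        then have "ip c x = 0" using x c unfolding mem_Sset by blast
        then show ?thesis using ipp[OF c(1)] False by (simp add: ip_diff_right)
      qed
    qed
    have "x \<in> {x + y |x y. x \<in> Sset C \<kappa> A \<and> y \<in> Sset C \<kappa> B}"
    proof (rule CollectI, intro exI conjI)
      show "x = p + (x - p)" by simp
      show "p \<in> Sset C \<kappa> A" by (rule p)
      show "x - p \<in> Sset C \<kappa> B" by (rule q)
    qed
    then show "x \<in> sjoin (Sset C \<kappa> A) (Sset C \<kappa> B)"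
      unfolding sjoin_def by (rule closure_subset[THEN subsetD])
  qed
qed

lemma Wgen_bool:
  assumes cC: "complete_on C"
  shows "range (Sset C \<kappa>) \<in> bool_subalgebras smul ip"
  unfolding bool_subalgebras_def
proof (intro CollectI conjI ballI)
  have r: "Sset C \<kappa> A \<in> range (Sset C \<kappa>)" for A by (rule rangeI)
  show "range (Sset C \<kappa>) \<subseteq> LH smul" using Sset_LH by blast
  show "{0} \<in> range (Sset C \<kappa>)" using r[of "{}"] Sset_empty[OF cC, of \<kappa>] by simp
  show "UNIV \<in> range (Sset C \<kappa>)" using r[of UNIV] Sset_all[of C \<kappa> UNIV] by simp
  fix a b assume a: "a \<in> range (Sset C \<kappa>)" and b: "b \<in> range (Sset C \<kappa>)"
  then obtain A B where ab: "a = Sset C \<kappa> A" "b = Sset C \<kappa> B" by blast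
  show "a \<inter> b \<in> range (Sset C \<kappa>)" unfolding ab Sset_Int by (rule rangeI)
  show "sjoin a b \<in> range (Sset C \<kappa>)" unfolding ab sjoin_Sset[OF cC] by (rule rangeI)
  fix c assume "c \<in> range (Sset C \<kappa>)"
  then obtain Cc where c: "c = Sset C \<kappa> Cc" by blast
  show "a \<inter> sjoin b c = sjoin (a \<inter> b) (a \<inter> c)"
    using ab c by (simp add: Sset_Int sjoin_Sset[OF cC] Int_Un_distrib)
next
  have r: "Sset C \<kappa> A \<in> range (Sset C \<kappa>)" for A by (rule rangeI)
  fix a assume "a \<in> range (Sset C \<kappa>)"
  then obtain A where aA: "a = Sset C \<kappa> A" by blast
  show "orth ip a \<in> range (Sset C \<kappa>)" unfolding aA orth_Sset[OF cC] by (rule rangeI)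
qed

lemma quad_eq:
  "range (Sset C Q) = {{0}, orth ip {c\<in>C. \<not> Q c}, orth ip {c\<in>C. Q c}, UNIV}" if cC: "complete_on C"
proof (intro set_eqI iffI)
  fix P assume "P \<in> range (Sset C Q)"
  then obtain A where P: "P = Sset C Q A" by blast
  have "P = UNIV \<or> P = orth ip {c\<in>C. \<not> Q c} \<or> P = orth ip {c\<in>C. Q c} \<or> P = {0}"
  proof (cases "True \<in> A"; cases "False \<in> A")
    assume "True \<in> A" "False \<in> A"
    then have "\<forall>b::bool. b \<in> A" by (intro allI, case_tac b) simp_all
    then have "P = UNIV" unfolding P by (intro Sset_all) simp
    then show ?thesis by blast
  next
    assume "True \<in> A" "False \<notin> A"
    then have "\<forall>b::bool. (b \<notin> A) = (\<not> b)" by (intro allI, case_tac b) simp_all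
    then have "{c\<in>C. Q c \<notin> A} = {c\<in>C. \<not> Q c}" by simp
    then show ?thesis unfolding P Sset_def by simp
  next
    assume "True \<notin> A" "False \<in> A"
    then have "\<forall>b::bool. (b \<notin> A) = b" by (intro allI, case_tac b) simp_all
    then have "{c\<in>C. Q c \<notin> A} = {c\<in>C. Q c}" by simp
    then show ?thesis unfolding P Sset_def by simp
  next
    assume "True \<notin> A" "False \<notin> A"
    then have "\<forall>b::bool. b \<notin> A" by (intro allI, case_tac b) simp_all
    then have "P = Sset C Q {}" unfolding P Sset_def by simp
    then show ?thesis using Sset_empty[OF cC] by blast
  qed
  then show "P \<in> {{0}, orth ip {c\<in>C. \<not> Q c}, orth ip {c\<in>C. Q c}, UNIV}" by blast
next
  fix P assume P: "P \<in> {{0}, orth ip {c\<in>C. \<not> Q c}, orth ip {c\<in>C. Q c}, UNIV}"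
  have e1: "Sset C Q {} = {0}" using Sset_empty[OF cC] .
  have e2: "Sset C Q {True} = orth ip {c\<in>C. \<not> Q c}" unfolding Sset_def by simp
  have e3: "Sset C Q {False} = orth ip {c\<in>C. Q c}" unfolding Sset_def by simp
  have e4: "Sset C Q UNIV = UNIV" by (rule Sset_all) auto
  have "P = Sset C Q {} \<or> P = Sset C Q {True} \<or> P = Sset C Q {False} \<or> P = Sset C Q UNIV"
    using P unfolding e1 e2 e3 e4 by simp
  then show "P \<in> range (Sset C Q)" by (elim disjE) (simp_all add: rangeI)
qed

lemma quad_bool:
  assumes "complete_on C"
  shows "{{0}, orth ip {c\<in>C. \<not> Q c}, orth ip {c\<in>C. Q c}, UNIV} \<in> bool_subalgebras smul ip"
  using Wgen_bool[OF assms, of Q] quad_eq[OF assms] by simp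

lemma orth_orth_Q:
  assumes cC: "complete_on C"
  shows "orth ip (orth ip {c\<in>C. Q c}) = orth ip {c\<in>C. \<not> Q c}"
proof -
  have "orth ip {c\<in>C. Q c} = Sset C Q {False}" unfolding Sset_def by simp
  then have "orth ip (orth ip {c\<in>C. Q c}) = Sset C Q (- {False})" using orth_Sset[OF cC] by simp
  also have "- {False} = {True}" by auto
  finally show ?thesis unfolding Sset_def by simp
qed

end

locale sect = chs smul ip
  for smul :: "complex \<Rightarrow> 'a::{real_normed_vector, complete_space} \<Rightarrow> 'a"
    and ip :: "'a \<Rightarrow> 'a \<Rightarrow> complex" +
  fixes \<tau> :: "'a set set \<Rightarrow> 'a set set \<times> ('a set \<Rightarrow> bool)"
  assumes cont: "continuous_map (downset_topology (bool_subalgebras smul ip) (\<subseteq>))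
                               (downset_topology (spectral_E smul ip) sheaf_le) \<tau>"
    and sec: "\<forall>W\<in>bool_subalgebras smul ip. fst (\<tau> W) = W"
begin

lemma tauE: "W \<in> bool_subalgebras smul ip \<Longrightarrow> \<tau> W \<in> spectral_E smul ip"
  using cont unfolding continuous_map_def topspace_downset_topology by (simp add: Pi_iff)

lemma hom: "W \<in> bool_subalgebras smul ip \<Longrightarrow> bool_hom ip W (snd (\<tau> W))"
proof -
  assume W: "W \<in> bool_subalgebras smul ip"
  obtain a b where ab: "\<tau> W = (a, b)" by (cases "\<tau> W")
  have "a = W" using sec W ab by (metis fst_conv)
  then show ?thesis using tauE[OF W] ab unfolding spectral_E_def by simp
qed

lemma homD:
  assumes "W \<in> bool_subalgebras smul ip"
  shows "snd (\<tau> W) {0} = False" "snd (\<tau> W) UNIV = True"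
    "\<And>a b. a \<in> W \<Longrightarrow> b \<in> W \<Longrightarrow> snd (\<tau> W) (a \<inter> b) = (snd (\<tau> W) a \<and> snd (\<tau> W) b)"
    "\<And>a b. a \<in> W \<Longrightarrow> b \<in> W \<Longrightarrow> snd (\<tau> W) (sjoin a b) = (snd (\<tau> W) a \<or> snd (\<tau> W) b)"
  using hom[OF assms] unfolding bool_hom_def by simp_all

lemma mono:
  assumes W1: "W1 \<in> bool_subalgebras smul ip" and W2: "W2 \<in> bool_subalgebras smul ip"
    and sub: "W1 \<subseteq> W2" and P: "P \<in> W1"
  shows "snd (\<tau> W1) P = snd (\<tau> W2) P"
proof -
  define U where "U = {q \<in> spectral_E smul ip. sheaf_le q (\<tau> W2)}"
  have "down_closed (spectral_E smul ip) sheaf_le U"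
    unfolding down_closed_def U_def sheaf_le_def by auto
  then have "openin (downset_topology (spectral_E smul ip) sheaf_le) U"
    by (simp add: openin_downset_topology)
  then have "openin (downset_topology (bool_subalgebras smul ip) (\<subseteq>))
      {x \<in> topspace (downset_topology (bool_subalgebras smul ip) (\<subseteq>)). \<tau> x \<in> U}"
    using cont unfolding continuous_map_def by simp
  then have dc: "down_closed (bool_subalgebras smul ip) (\<subseteq>) {x \<in> bool_subalgebras smul ip. \<tau> x \<in> U}"
    by (simp add: openin_downset_topology topspace_downset_topology)
  have "W2 \<in> {x \<in> bool_subalgebras smul ip. \<tau> x \<in> U}"
    using W2 tauE[OF W2] unfolding U_def sheaf_le_def by simp
  then have "W1 \<in> {x \<in> bool_subalgebras smul ip. \<tau> x \<in> U}"
    using dc W1 sub unfolding down_closed_def by simp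
  then have "sheaf_le (\<tau> W1) (\<tau> W2)" unfolding U_def by simp
  then show ?thesis using P sec W1 unfolding sheaf_le_def by simp
qed

definition val :: "'a set \<Rightarrow> bool" where
  "val P = snd (\<tau> {{0}, P, orth ip P, UNIV}) P"

lemma val_eq:
  assumes W: "W \<in> bool_subalgebras smul ip" and P: "P \<in> W"
    and Q: "{{0}, P, orth ip P, UNIV} \<in> bool_subalgebras smul ip"
  shows "snd (\<tau> W) P = val P"
proof -
  have "{{0}, P, orth ip P, UNIV} \<subseteq> W"
    using W P unfolding bool_subalgebras_def by simp
  then show ?thesis unfolding val_def using mono[OF Q W] by simp
qed

lemma orth_C: "complete_on C \<Longrightarrow> orth ip C = {0}"
  using Sset_empty[of C "\<lambda>_. True"] unfolding Sset_def by simp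

lemma orth_zero: "orth ip {0} = UNIV"
  unfolding orth_def by simp

lemma val_zero:
  assumes cC: "complete_on C"
  shows "\<not> val {0}"
proof -
  have "{{0}, orth ip {c\<in>C. \<not> True}, orth ip {c\<in>C. True}, UNIV} \<in> bool_subalgebras smul ip"
    by (rule quad_bool[OF cC])
  moreover have "{{0}, orth ip {c\<in>C. \<not> True}, orth ip {c\<in>C. True}, UNIV} = {{0}, {0}, orth ip {0}, UNIV}"
    using orth_C[OF cC] orth_zero by (auto simp: orth_def)
  ultimately have B: "{{0}, {0}, orth ip {0}, UNIV} \<in> bool_subalgebras smul ip" by simp
  show ?thesis unfolding val_def using homD(1)[OF B] by simp
qed

lemma atom_val:
  assumes cC: "complete_on C"
  shows "snd (\<tau> (range (Sset C \<kappa>))) (Sset C \<kappa> {i}) = val (Sset C \<kappa> {i})"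
proof (rule val_eq[OF Wgen_bool[OF cC] rangeI])
  have P: "Sset C \<kappa> {i} = orth ip {c\<in>C. \<not> (\<kappa> c = i)}" unfolding Sset_def by simp
  have "orth ip (Sset C \<kappa> {i}) = orth ip {c\<in>C. \<kappa> c = i}"
    unfolding P using orth_orth_Q[OF cC, of "\<lambda>c. \<not> (\<kappa> c = i)"] by simp
  then show "{{0}, Sset C \<kappa> {i}, orth ip (Sset C \<kappa> {i}), UNIV} \<in> bool_subalgebras smul ip"
    using quad_bool[OF cC, of "\<lambda>c. \<kappa> c = i"] P by simp
qed

lemma exactly_one:
  assumes cC: "complete_on C" and fI: "finite I" and kI: "\<And>c. c \<in> C \<Longrightarrow> \<kappa> c \<in> I"
  shows "\<exists>i\<in>I. val (Sset C \<kappa> {i})"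
    and "\<And>i j. i \<in> I \<Longrightarrow> j \<in> I \<Longrightarrow> i \<noteq> j \<Longrightarrow> val (Sset C \<kappa> {i}) \<Longrightarrow> val (Sset C \<kappa> {j}) \<Longrightarrow> False"
proof -
  define W where "W = range (Sset C \<kappa>)"
  have W: "W \<in> bool_subalgebras smul ip" unfolding W_def by (rule Wgen_bool[OF cC])
  define f where "f = snd (\<tau> W)"
  have r: "Sset C \<kappa> A \<in> W" for A unfolding W_def by (rule rangeI)
  have av: "f (Sset C \<kappa> {i}) = val (Sset C \<kappa> {i})" for i
    unfolding f_def W_def by (rule atom_val[OF cC])
  have un: "f (Sset C \<kappa> A) = (\<exists>i\<in>A. f (Sset C \<kappa> {i}))" if "finite A" for A
    using that
  proof (induction A rule: finite_induct)
    case empty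
    then show ?case using homD(1)[OF W] unfolding f_def Sset_empty[OF cC] by simp
  next
    case (insert i A)
    have "Sset C \<kappa> (insert i A) = sjoin (Sset C \<kappa> {i}) (Sset C \<kappa> A)"
      using sjoin_Sset[OF cC, of \<kappa> "{i}" A] by simp
    then have "f (Sset C \<kappa> (insert i A)) = (f (Sset C \<kappa> {i}) \<or> f (Sset C \<kappa> A))"
      using homD(4)[OF W r r] unfolding f_def by simp
    then show ?case using insert.IH by simp
  qed
  have "f (Sset C \<kappa> I) = True"
    using homD(2)[OF W] Sset_all[of C \<kappa> I] kI unfolding f_def by simp
  then show "\<exists>i\<in>I. val (Sset C \<kappa> {i})" using un[OF fI] av by simp
next
  fix i j assume ij: "i \<in> I" "j \<in> I" "i \<noteq> j" and vi: "val (Sset C \<kappa> {i})" and vj: "val (Sset C \<kappa> {j})"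
  define W where "W = range (Sset C \<kappa>)"
  have W: "W \<in> bool_subalgebras smul ip" unfolding W_def by (rule Wgen_bool[OF cC])
  define f where "f = snd (\<tau> W)"
  have r: "Sset C \<kappa> A \<in> W" for A unfolding W_def by (rule rangeI)
  have av: "f (Sset C \<kappa> {i}) = val (Sset C \<kappa> {i})" for i
    unfolding f_def W_def by (rule atom_val[OF cC])
  have e0: "Sset C \<kappa> {i} \<inter> Sset C \<kappa> {j} = {0}"
    using Sset_Int[of C \<kappa> "{i}" "{j}"] Sset_empty[OF cC, of \<kappa>] ij(3) by simp
  have "f {0} = (f (Sset C \<kappa> {i}) \<and> f (Sset C \<kappa> {j}))"
    using homD(3)[OF W r[of "{i}"] r[of "{j}"]] unfolding f_def e0 .
  then show False using homD(1)[OF W] vi vj av unfolding f_def by simp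
qed

end

type_synonym v3 = "int \<times> int \<times> int"
definition dot :: "v3 \<Rightarrow> v3 \<Rightarrow> int" where
  "dot v w = fst v * fst w + fst (snd v) * fst (snd w) + snd (snd v) * snd (snd w)"
definition cmp3 :: "v3 \<Rightarrow> nat \<Rightarrow> int" where
  "cmp3 v j = (if j = 1 then fst v else if j = 2 then fst (snd v) else snd (snd v))"
definition good :: "v3 \<times> v3 \<times> v3 \<Rightarrow> bool" where
  "good t = (case t of (a, b, c) \<Rightarrow> dot a b = 0 \<and> dot a c = 0 \<and> dot b c = 0 \<and>
     dot a a \<noteq> 0 \<and> dot b b \<noteq> 0 \<and> dot c c \<noteq> 0 \<and>
     (\<forall>j\<in>{1,2,3}. \<forall>k\<in>{1,2,3}. cmp3 a j * cmp3 a k * dot b b * dot c c + cmp3 b j * cmp3 b k * dot a a * dot c c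
        + cmp3 c j * cmp3 c k * dot a a * dot b b = (if j = k then dot a a * dot b b * dot c c else 0)))"
definition tri :: "(v3 \<Rightarrow> bool) \<Rightarrow> v3 \<times> v3 \<times> v3 \<Rightarrow> bool" where
  "tri V t = (case t of (a, b, c) \<Rightarrow> (V a \<or> V b \<or> V c) \<and> \<not> (V a \<and> V b) \<and> \<not> (V a \<and> V c) \<and> \<not> (V b \<and> V c))"

definition cf :: "v3 \<Rightarrow> nat \<Rightarrow> real" where
  "cf v j = real_of_int (cmp3 v j) / sqrt (real_of_int (dot v v))"

lemma dot_self_nonneg: "0 \<le> dot v v"
  unfolding dot_def by simp

lemma dot_comm: "dot v w = dot w v"
  unfolding dot_def by (simp add: mult.commute)

lemma dot_cmp3: "dot v w = cmp3 v 1 * cmp3 w 1 + cmp3 v 2 * cmp3 w 2 + cmp3 v 3 * cmp3 w 3"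
  unfolding dot_def cmp3_def by simp

lemma cf_mult: "cf v j * cf v k = real_of_int (cmp3 v j * cmp3 v k) / real_of_int (dot v v)"
proof -
  have "sqrt (real_of_int (dot v v)) * sqrt (real_of_int (dot v v)) = real_of_int (dot v v)"
    using dot_self_nonneg[of v] by simp
  then show ?thesis unfolding cf_def by (simp add: field_simps)
qed

lemma cf_dot:
  "cf v 1 * cf w 1 + cf v 2 * cf w 2 + cf v 3 * cf w 3
     = real_of_int (dot v w) / (sqrt (real_of_int (dot v v)) * sqrt (real_of_int (dot w w)))"
proof -
  have "real_of_int (dot v w) = real_of_int (cmp3 v 1) * real_of_int (cmp3 w 1) + real_of_int (cmp3 v 2) * real_of_int (cmp3 w 2)
      + real_of_int (cmp3 v 3) * real_of_int (cmp3 w 3)"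
    unfolding dot_cmp3 by simp
  then show ?thesis unfolding cf_def by (simp add: add_divide_distrib)
qed

lemma cf_self: "dot v v \<noteq> 0 \<Longrightarrow> cf v 1 * cf v 1 + cf v 2 * cf v 2 + cf v 3 * cf v 3 = 1"
proof -
  assume "dot v v \<noteq> 0"
  then have pos: "real_of_int (dot v v) > 0" using dot_self_nonneg[of v] by simp
  have "sqrt (real_of_int (dot v v)) * sqrt (real_of_int (dot v v)) = real_of_int (dot v v)"
    using pos by simp
  then show ?thesis unfolding cf_dot using pos by simp
qed

lemma cf_orth: "dot v w = 0 \<Longrightarrow> cf v 1 * cf w 1 + cf v 2 * cf w 2 + cf v 3 * cf w 3 = 0"
  unfolding cf_dot by simp

lemma good_complete:
  assumes g: "good (a, b, c)" and j: "j \<in> {1,2,3}" and k: "k \<in> {1,2,3}"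
  shows "cf a j * cf a k + cf b j * cf b k + cf c j * cf c k = (if j = k then 1 else 0)"
proof -
  have na: "dot a a \<noteq> 0" and nb: "dot b b \<noteq> 0" and nc: "dot c c \<noteq> 0"
    using g unfolding good_def by auto
  have I: "cmp3 a j * cmp3 a k * dot b b * dot c c + cmp3 b j * cmp3 b k * dot a a * dot c c
        + cmp3 c j * cmp3 c k * dot a a * dot b b = (if j = k then dot a a * dot b b * dot c c else 0)"
    using g j k unfolding good_def by auto
  have R: "real_of_int (cmp3 a j * cmp3 a k * dot b b * dot c c + cmp3 b j * cmp3 b k * dot a a * dot c c
        + cmp3 c j * cmp3 c k * dot a a * dot b b) = real_of_int (if j = k then dot a a * dot b b * dot c c else 0)"
    using I by simp
  show ?thesis unfolding cf_mult using na nb nc R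
    by (cases "j = k") (simp_all add: field_simps)
qed

lemma good_distinct:
  assumes g: "good (a, b, c)"
  shows "a \<noteq> b" "a \<noteq> c" "b \<noteq> c"
  using g unfolding good_def by auto

definition ks_list :: "(v3 \<times> v3 \<times> v3) list" where
  "ks_list = [
    ((0, 0, 1), (1, 2, 0), (2, (-1), 0)),
    ((1, (-1), (-1)), (1, (-1), 2), (1, 1, 0)),
    ((1, (-1), (-1)), (1, 0, 1), (1, 2, (-1))),
    ((1, (-2), (-1)), (1, 0, 1), (1, 1, (-1))),
    ((1, (-1), 0), (1, 1, (-2)), (1, 1, 1)),
    ((1, (-5), (-2)), (1, 1, (-2)), (2, 0, 1)),
    ((0, 1, 0), (1, 0, 2), (2, 0, (-1))),
    ((1, (-1), (-2)), (1, (-1), 1), (1, 1, 0)),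
    ((1, (-1), 1), (1, 0, (-1)), (1, 2, 1)),
    ((1, 2, (-1)), (1, 2, 5), (2, (-1), 0)),
    ((1, (-1), (-2)), (1, 5, (-2)), (2, 0, 1)),
    ((1, 0, 2), (2, (-1), (-1)), (2, 5, (-1))),
    ((0, 2, (-1)), (1, 1, 2), (5, (-1), (-2))),
    ((0, 1, 2), (1, (-2), 1), (5, 2, (-1))),
    ((0, 1, 1), (1, 1, (-1)), (2, (-1), 1)),
    ((1, (-2), (-5)), (1, (-2), 1), (2, 1, 0)),
    ((0, 1, (-1)), (0, 1, 1), (1, 0, 0)),
    ((1, 0, 2), (2, (-5), (-1)), (2, 1, (-1))),
    ((1, (-5), 2), (1, 1, 2), (2, 0, (-1))),
    ((1, (-2), 0), (2, 1, (-1)), (2, 1, 5)),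
    ((0, 0, 1), (1, (-2), 0), (2, 1, 0)),
    ((0, 1, 0), (1, 0, (-1)), (1, 0, 1)),
    ((0, 2, (-1)), (1, (-1), (-2)), (5, 1, 2)),
    ((1, (-2), 1), (1, 0, (-1)), (1, 1, 1)),
    ((0, 0, 1), (1, (-1), 0), (1, 1, 0)),
    ((0, 1, 2), (1, 2, (-1)), (5, (-2), 1)),
    ((1, (-1), 0), (1, 1, (-1)), (1, 1, 2)),
    ((0, 1, 2), (0, 2, (-1)), (1, 0, 0)),
    ((1, 0, (-2)), (2, (-1), 1), (2, 5, 1)),
    ((0, 0, 1), (0, 1, 0), (1, 0, 0)),
    ((0, 1, (-1)), (1, 1, 1), (2, (-1), (-1))),
    ((0, 1, (-1)), (1, (-1), (-1)), (2, 1, 1)),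
    ((1, 2, 0), (2, (-1), (-5)), (2, (-1), 1)),
    ((1, 0, (-2)), (2, (-5), 1), (2, 1, 1)),
    ((0, 1, 0), (1, 0, (-2)), (2, 0, 1)),
    ((0, 1, 1), (1, (-1), 1), (2, 1, (-1))),
    ((1, (-2), 0), (2, 1, (-5)), (2, 1, 1))
  ]"

lemma ks_good: "\<forall>t\<in>set ks_list. good t"
  by (simp add: ks_list_def good_def dot_def cmp3_def)

lemma ks_unsat: "\<not> (\<forall>t\<in>set ks_list. tri V t)"
  apply (simp add: ks_list_def tri_def)
  apply sat
  done

locale kssetup = sect smul ip \<tau>
  for smul :: "complex \<Rightarrow> 'a::{real_normed_vector, complete_space} \<Rightarrow> 'a"
    and ip :: "'a \<Rightarrow> 'a \<Rightarrow> complex"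
    and \<tau> :: "'a set set \<Rightarrow> 'a set set \<times> ('a set \<Rightarrow> bool)" +
  fixes B :: "'a set" and B0 :: "'a set" and e :: "'a \<Rightarrow> nat \<Rightarrow> 'a" and R :: "'a set"
  assumes cB: "complete_on B"
    and eB: "\<And>\<beta> j. \<beta> \<in> B0 \<Longrightarrow> j \<in> {1,2,3} \<Longrightarrow> e \<beta> j \<in> B"
    and einj: "\<And>\<beta> \<beta>' j j'. \<beta> \<in> B0 \<Longrightarrow> \<beta>' \<in> B0 \<Longrightarrow> j \<in> {1,2,3} \<Longrightarrow> j' \<in> {1,2,3} \<Longrightarrow>
                 e \<beta> j = e \<beta>' j' \<Longrightarrow> \<beta> = \<beta>' \<and> j = j'"
    and R_def: "R = B - {e \<beta> j |\<beta> j. \<beta> \<in> B0 \<and> j \<in> {1,2,3}}"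
    and Rfalse: "\<not> val (orth ip (orth ip R))"
begin

definition gv :: "'a \<Rightarrow> v3 \<Rightarrow> 'a" where
  "gv \<beta> v = smul (complex_of_real (cf v 1)) (e \<beta> 1) + smul (complex_of_real (cf v 2)) (e \<beta> 2)
           + smul (complex_of_real (cf v 3)) (e \<beta> 3)"

definition GG :: "v3 \<Rightarrow> 'a set" where
  "GG v = (\<lambda>\<beta>. gv \<beta> v) ` B0"

lemma oB: "orthonormal B" using complete_on_orth[OF cB] .

lemma ip_ee:
  assumes "\<beta> \<in> B0" "\<beta>' \<in> B0" "j \<in> {1,2,3}" "j' \<in> {1,2,3}"
  shows "ip (e \<beta> j) (e \<beta>' j') = (if \<beta> = \<beta>' \<and> j = j' then 1 else 0)"
proof (cases "\<beta> = \<beta>' \<and> j = j'")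
  case True
  then show ?thesis using oB eB[OF assms(1,3)] unfolding orthonormal_def by simp
next
  case False
  then have "e \<beta> j \<noteq> e \<beta>' j'" using einj[OF assms] by blast
  then show ?thesis using False oB eB[OF assms(1,3)] eB[OF assms(2,4)] unfolding orthonormal_def by simp
qed

lemma ip_g_left: "ip (gv \<beta> v) y = complex_of_real (cf v 1) * ip (e \<beta> 1) y
   + complex_of_real (cf v 2) * ip (e \<beta> 2) y + complex_of_real (cf v 3) * ip (e \<beta> 3) y"
  unfolding gv_def by (simp add: ip_add_left)

lemma ip_g_right: "ip y (gv \<beta> v) = complex_of_real (cf v 1) * ip y (e \<beta> 1)
   + complex_of_real (cf v 2) * ip y (e \<beta> 2) + complex_of_real (cf v 3) * ip y (e \<beta> 3)"
  unfolding gv_def by (simp add: ip_add_right)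

lemma ip_gg:
  assumes "\<beta> \<in> B0" "\<beta>' \<in> B0"
  shows "ip (gv \<beta> v) (gv \<beta>' w) = (if \<beta> = \<beta>' then
     complex_of_real (cf v 1 * cf w 1 + cf v 2 * cf w 2 + cf v 3 * cf w 3) else 0)"
  unfolding ip_g_left ip_g_right using assms by (simp add: ip_ee algebra_simps)

lemma ip_gR:
  assumes "\<beta> \<in> B0" "r \<in> R"
  shows "ip (gv \<beta> v) r = 0"
proof -
  have rB: "r \<in> B" using assms(2) R_def by simp
  have ne: "e \<beta> j \<noteq> r" if "j \<in> {1,2,3}" for j
    using assms R_def that by blast
  have "ip (e \<beta> j) r = 0" if "j \<in> {1,2,3}" for j
    using oB rB eB[OF assms(1) that] ne[OF that] unfolding orthonormal_def by simp
  then show ?thesis unfolding ip_g_left by simp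
qed


definition VV :: "v3 \<Rightarrow> bool" where
  "VV v = val (orth ip (orth ip (GG v)))"

lemma ip_gg_good:
  assumes g: "good (a, b, c)" and v: "v \<in> {a, b, c}" and w: "w \<in> {a, b, c}"
    and b1: "\<beta> \<in> B0" and b2: "\<beta>' \<in> B0"
  shows "ip (gv \<beta> v) (gv \<beta>' w) = (if \<beta> = \<beta>' \<and> v = w then 1 else 0)"
proof -
  have nz: "dot v v \<noteq> 0" using g v unfolding good_def by auto
  have o: "v \<noteq> w \<Longrightarrow> dot v w = 0" using g v w unfolding good_def by (auto simp: dot_comm)
  show ?thesis
    unfolding ip_gg[OF b1 b2] using cf_self[OF nz] cf_orth[OF o] by (auto simp del: of_real_add of_real_mult)
qed

lemma tri_ok:
  assumes g: "good (a, b, c)"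
  shows "tri VV (a, b, c)"
proof -
  define Ct where "Ct = GG a \<union> GG b \<union> GG c \<union> R"
  have RB: "R \<subseteq> B" using R_def by auto
  have memG: "y \<in> GG v \<longleftrightarrow> (\<exists>\<beta>\<in>B0. y = gv \<beta> v)" for y v unfolding GG_def by auto
  have abc: "a \<in> {a,b,c}" "b \<in> {a,b,c}" "c \<in> {a,b,c}" by auto
  have ipGG: "ip y z = (if y = z then 1 else 0)" if H: "y \<in> GG v" "z \<in> GG w" "v \<in> {a,b,c}" "w \<in> {a,b,c}" for y z v w
  proof -
    obtain \<beta> where \<beta>: "\<beta> \<in> B0" "y = gv \<beta> v" using H(1) unfolding GG_def by auto
    obtain \<beta>' where \<beta>': "\<beta>' \<in> B0" "z = gv \<beta>' w" using H(2) unfolding GG_def by auto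
    have s: "ip y y = 1" using ip_gg_good[OF g H(3) H(3) \<beta>(1) \<beta>(1)] \<beta>(2) by simp
    have t: "ip y z = (if \<beta> = \<beta>' \<and> v = w then 1 else 0)"
      using ip_gg_good[OF g H(3,4) \<beta>(1) \<beta>'(1)] \<beta>(2) \<beta>'(2) by simp
    show ?thesis
    proof (cases "y = z")
      case True then show ?thesis using s by simp
    next
      case False
      then have "\<not> (\<beta> = \<beta>' \<and> v = w)" using \<beta>(2) \<beta>'(2) by auto
      then show ?thesis using t False by simp
    qed
  qed
  have ipGR: "ip y r = 0" if H: "y \<in> GG v" "r \<in> R" for y r v
  proof -
    obtain \<beta> where \<beta>: "\<beta> \<in> B0" "y = gv \<beta> v" using H(1) unfolding GG_def by auto
    show ?thesis using ip_gR[OF \<beta>(1) H(2)] \<beta>(2) by simp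
  qed
  have ipRG: "ip r y = 0" if H: "y \<in> GG v" "r \<in> R" for y r v
    using ipGR[OF H] ip_conj[of r y] by simp
  have ipRR: "ip r s = (if r = s then 1 else 0)" if "r \<in> R" "s \<in> R" for r s
    using oB RB that unfolding orthonormal_def by auto
  have disjGR: "y \<notin> R" if H: "y \<in> GG v" "v \<in> {a,b,c}" for y v
    using ipGR[OF H(1)] ipGG[OF H(1) H(1) H(2) H(2)] by force
  have disjGG: "y \<notin> GG w" if H: "y \<in> GG v" "v \<in> {a,b,c}" "w \<in> {a,b,c}" "v \<noteq> w" for y v w
  proof
    assume yw: "y \<in> GG w"
    obtain \<beta> where \<beta>: "\<beta> \<in> B0" "y = gv \<beta> v" using H(1) unfolding GG_def by auto
    obtain \<beta>' where \<beta>': "\<beta>' \<in> B0" "y = gv \<beta>' w" using yw unfolding GG_def by auto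
    have "ip y y = 0" using ip_gg_good[OF g H(2,3) \<beta>(1) \<beta>'(1)] \<beta> \<beta>' H(4) by simp
    moreover have "ip y y = 1" using ipGG[OF H(1) H(1) H(2) H(2)] by simp
    ultimately show False by simp
  qed
  have cls: "(\<exists>v\<in>{a,b,c}. y \<in> GG v) \<or> y \<in> R" if "y \<in> Ct" for y
    using that unfolding Ct_def by auto
  have oCt: "orthonormal Ct"
    unfolding orthonormal_def
  proof (intro conjI ballI impI)
    fix y assume "y \<in> Ct"
    then have "(\<exists>v\<in>{a,b,c}. y \<in> GG v) \<or> y \<in> R" by (rule cls)
    then show "ip y y = 1"
    proof
      assume "\<exists>v\<in>{a,b,c}. y \<in> GG v"
      then obtain v where "v \<in> {a,b,c}" "y \<in> GG v" by blast
      then show ?thesis using ipGG[of y v y v] by simp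
    next
      assume "y \<in> R" then show ?thesis using ipRR[of y y] by simp
    qed
  next
    fix y z assume yz: "y \<in> Ct" "z \<in> Ct" "y \<noteq> z"
    have cy: "(\<exists>v\<in>{a,b,c}. y \<in> GG v) \<or> y \<in> R" using yz(1) by (rule cls)
    have cz: "(\<exists>v\<in>{a,b,c}. z \<in> GG v) \<or> z \<in> R" using yz(2) by (rule cls)
    show "ip y z = 0"
    proof (cases "y \<in> R")
      case yR: True
      show ?thesis
      proof (cases "z \<in> R")
        case True then show ?thesis using ipRR[OF yR True] yz(3) by simp
      next
        case False
        then obtain w where "w \<in> {a,b,c}" "z \<in> GG w" using cz by blast
        then show ?thesis using ipRG[OF _ yR] by blast
      qed
    next
      case yR: False
      then obtain v where v: "v \<in> {a,b,c}" "y \<in> GG v" using cy by blast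
      show ?thesis
      proof (cases "z \<in> R")
        case True then show ?thesis using ipGR[OF v(2) True] by simp
      next
        case False
        then obtain w where "w \<in> {a,b,c}" "z \<in> GG w" using cz by blast
        then show ?thesis using ipGG[OF v(2) _ v(1)] yz(3) by simp
      qed
    qed
  qed
  have cCt: "complete_on Ct"
    unfolding complete_on_def
  proof (intro conjI allI impI oCt)
    fix x assume x: "\<forall>y\<in>Ct. ip y x = 0"
    show "x = 0"
    proof (rule complete_onD[OF cB])
      fix y assume yB: "y \<in> B"
      show "ip y x = 0"
      proof (cases "y \<in> R")
        case True then show ?thesis using x unfolding Ct_def by auto
      next
        case False
        then obtain \<beta> j where bj: "\<beta> \<in> B0" "j \<in> {1,2,3}" "y = e \<beta> j" using yB R_def by auto
        have g0: "ip (gv \<beta> v) x = 0" if "v \<in> {a,b,c}" for v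
          using x bj(1) that unfolding Ct_def GG_def by auto
        define X1 X2 X3 where "X1 = ip (e \<beta> 1) x" and "X2 = ip (e \<beta> 2) x" and "X3 = ip (e \<beta> 3) x"
        have gx: "ip (gv \<beta> v) x = complex_of_real (cf v 1) * X1 + complex_of_real (cf v 2) * X2 + complex_of_real (cf v 3) * X3" for v
          unfolding ip_g_left X1_def X2_def X3_def ..
        have "complex_of_real (cf a j) * ip (gv \<beta> a) x + complex_of_real (cf b j) * ip (gv \<beta> b) x
            + complex_of_real (cf c j) * ip (gv \<beta> c) x
          = complex_of_real (cf a j * cf a 1 + cf b j * cf b 1 + cf c j * cf c 1) * X1
          + complex_of_real (cf a j * cf a 2 + cf b j * cf b 2 + cf c j * cf c 2) * X2
          + complex_of_real (cf a j * cf a 3 + cf b j * cf b 3 + cf c j * cf c 3) * X3"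
          unfolding gx by (simp add: algebra_simps)
        also have "\<dots> = ip (e \<beta> j) x"
          using good_complete[OF g bj(2), of 1] good_complete[OF g bj(2), of 2] good_complete[OF g bj(2), of 3] bj(2)
          unfolding X1_def X2_def X3_def by auto
        finally show ?thesis using g0 abc bj(3) by simp
      qed
    qed
  qed
  define \<kappa> :: "'a \<Rightarrow> nat" where
    "\<kappa> y = (if y \<in> GG a then 1 else if y \<in> GG b then 2 else if y \<in> GG c then 3 else 0)" for y
  have ga: "{y\<in>Ct. \<kappa> y = 1} = GG a" unfolding Ct_def \<kappa>_def by auto
  have gb: "{y\<in>Ct. \<kappa> y = 2} = GG b" unfolding Ct_def \<kappa>_def
    using disjGG[OF _ abc(2) abc(1)] good_distinct[OF g] by auto
  have gc: "{y\<in>Ct. \<kappa> y = 3} = GG c" unfolding Ct_def \<kappa>_def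
    using disjGG[OF _ abc(3) abc(1)] disjGG[OF _ abc(3) abc(2)] good_distinct[OF g] by auto
  have gr: "{y\<in>Ct. \<kappa> y = 0} = R" unfolding Ct_def \<kappa>_def
    using disjGR[OF _ abc(1)] disjGR[OF _ abc(2)] disjGR[OF _ abc(3)] by auto
  have atom: "Sset Ct \<kappa> {i} = orth ip (orth ip {y\<in>Ct. \<kappa> y = i})" for i
    unfolding Sset_def using orth_orth_Q[OF cCt, of "\<lambda>y. \<kappa> y = i"] by simp
  have A1: "Sset Ct \<kappa> {1} = orth ip (orth ip (GG a))" using atom[of 1] ga by simp
  have A2: "Sset Ct \<kappa> {2} = orth ip (orth ip (GG b))" using atom[of 2] gb by simp
  have A3: "Sset Ct \<kappa> {3} = orth ip (orth ip (GG c))" using atom[of 3] gc by simp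
  have A0: "Sset Ct \<kappa> {0} = orth ip (orth ip R)" using atom[of 0] gr by simp
  have kI: "\<kappa> y \<in> {0,1,2,3}" for y unfolding \<kappa>_def by auto
  note E1 = exactly_one(1)[OF cCt, of "{0,1,2,3}" \<kappa>]
  note E2 = exactly_one(2)[OF cCt, of "{0,1,2,3}" \<kappa>]
  have "VV a \<or> VV b \<or> VV c"
    using E1 kI A0 A1 A2 A3 Rfalse unfolding VV_def by auto
  moreover have "\<not> (VV a \<and> VV b)" using E2[of 1 2] kI A1 A2 unfolding VV_def by auto
  moreover have "\<not> (VV a \<and> VV c)" using E2[of 1 3] kI A1 A3 unfolding VV_def by auto
  moreover have "\<not> (VV b \<and> VV c)" using E2[of 2 3] kI A2 A3 unfolding VV_def by auto
  ultimately show ?thesis unfolding tri_def by simp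
qed

lemma ks_contradiction: False
proof -
  have "\<forall>t\<in>set ks_list. tri VV t"
  proof
    fix t assume "t \<in> set ks_list"
    then have "good t" using ks_good by blast
    then show "tri VV t" using tri_ok by (cases t) auto
  qed
  then show False using ks_unsat by blast
qed

end

lemma inf_bij3:
  assumes "infinite (B :: 'a set)"
  shows "\<exists>h. bij_betw h (B \<times> {1,2,3::nat}) B"
proof -
  have "ordLess2 (card_of {1,2,3::nat}) (card_of B)"
    using finite_ordLess_infinite[of "card_of {1,2,3::nat}" "card_of B"] assms
    by (simp add: card_of_well_order_on Field_card_of)
  then have "ordLeq3 (card_of {1,2,3::nat}) (card_of B)" by (rule ordLess_imp_ordLeq)
  then have "ordIso2 (card_of (B \<times> {1,2,3::nat})) (card_of B)"
    using card_of_Times_infinite[OF assms, of "{1,2,3::nat}"] by simp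
  then show ?thesis using card_of_ordIso by blast
qed

context chs begin

definition nz :: "'a \<Rightarrow> 'a" where
  "nz x = smul (complex_of_real (1 / norm x)) x"

lemma ip_nz_left: "ip (nz x) y = complex_of_real (1 / norm x) * ip x y"
  unfolding nz_def by simp

lemma ip_nz_right: "ip y (nz x) = complex_of_real (1 / norm x) * ip y x"
  unfolding nz_def by simp

lemma ip_nz_self:
  assumes x0: "x \<noteq> 0"
  shows "ip (nz x) (nz x) = 1"
proof -
  have n: "norm x \<noteq> 0" using x0 by simp
  have "ip (nz x) (nz x) = complex_of_real (1/norm x) * (complex_of_real (1/norm x) * ip x x)"
    by (simp only: ip_nz_left ip_nz_right)
  also have "\<dots> = complex_of_real ((1/norm x) * (1/norm x) * (norm x)^2)"
    by (simp only: ip_self of_real_mult mult.assoc)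
  also have "(1/norm x) * (1/norm x) * (norm x)^2 = 1"
    using n by (simp add: power2_eq_square)
  finally show ?thesis by simp
qed

lemma exists_complete:
  assumes S: "orthonormal S"
  shows "\<exists>B. S \<subseteq> B \<and> complete_on B"
proof -
  define A where "A = {T. S \<subseteq> T \<and> orthonormal T}"
  have "\<exists>M\<in>A. \<forall>X\<in>A. M \<subseteq> X \<longrightarrow> X = M"
  proof (rule Zorn_Lemma2, intro ballI)
    fix C assume C: "C \<in> chains A"
    define U where "U = S \<union> \<Union>C"
    have CA: "C \<subseteq> A" using C by (rule chainsD2)
    have com: "\<exists>T. (T = S \<or> T \<in> C) \<and> c \<in> T \<and> d \<in> T" if H: "c \<in> U" "d \<in> U" for c d
    proof -
      obtain T1 where T1: "T1 = S \<or> T1 \<in> C" "c \<in> T1" using H(1) unfolding U_def by blast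
      obtain T2 where T2: "T2 = S \<or> T2 \<in> C" "d \<in> T2" using H(2) unfolding U_def by blast
      have ST: "S \<subseteq> T" if H2: "T \<in> C" for T using CA H2 unfolding A_def by blast
      show ?thesis
      proof (cases "T1 = S")
        case True
        have "c \<in> T2" using T2(1) True T1(2) ST by auto
        then show ?thesis using T2 by (intro exI[of _ T2] conjI) auto
      next
        case F1: False
        then have T1C: "T1 \<in> C" using T1(1) by simp
        show ?thesis
        proof (cases "T2 = S")
          case True
          have "d \<in> T1" using T2(2) True ST[OF T1C] by auto
          then show ?thesis using T1 by (intro exI[of _ T1] conjI) auto
        next
          case False
          then have T2C: "T2 \<in> C" using T2(1) by simp
          have "T1 \<subseteq> T2 \<or> T2 \<subseteq> T1" using chainsD[OF C T1C T2C] .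
          then show ?thesis
          proof
            assume "T1 \<subseteq> T2"
            then show ?thesis using T1 T2 by (intro exI[of _ T2] conjI) auto
          next
            assume "T2 \<subseteq> T1"
            then show ?thesis using T1 T2 by (intro exI[of _ T1] conjI) auto
          qed
        qed
      qed
    qed
    have oT: "orthonormal T" if "T = S \<or> T \<in> C" for T
      using that S CA unfolding A_def by blast
    have "orthonormal U"
      unfolding orthonormal_def
    proof (intro conjI ballI impI)
      fix c assume "c \<in> U"
      then obtain T where "T = S \<or> T \<in> C" "c \<in> T" using com by blast
      then show "ip c c = 1" using oT unfolding orthonormal_def by blast
    next
      fix c d assume "c \<in> U" "d \<in> U" "c \<noteq> d"
      then obtain T where T: "T = S \<or> T \<in> C" "c \<in> T" "d \<in> T" using com by blast
      have "orthonormal T" using oT T(1) .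
      then show "ip c d = 0" using T(2,3) \<open>c \<noteq> d\<close> unfolding orthonormal_def by simp
    qed
    then have "U \<in> A" unfolding A_def U_def by simp
    moreover have "\<forall>X\<in>C. X \<subseteq> U" unfolding U_def by blast
    ultimately show "\<exists>U\<in>A. \<forall>X\<in>C. X \<subseteq> U" by blast
  qed
  then obtain M where M: "M \<in> A" and max: "\<And>X. X \<in> A \<Longrightarrow> M \<subseteq> X \<Longrightarrow> X = M" by blast
  have oM: "orthonormal M" and SM: "S \<subseteq> M" using M unfolding A_def by auto
  have "complete_on M"
    unfolding complete_on_def
  proof (intro conjI allI impI oM)
    fix x assume x: "\<forall>c\<in>M. ip c x = 0"
    show "x = 0"
    proof (rule ccontr)
      assume x0: "x \<noteq> 0"
      define u where "u = nz x"
      have uu: "ip u u = 1" unfolding u_def by (rule ip_nz_self[OF x0])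
      have cu: "ip c u = 0" if "c \<in> M" for c
        unfolding u_def ip_nz_right using x that by simp
      have uc: "ip u c = 0" if "c \<in> M" for c
        using cu[OF that] ip_conj[of u c] by simp
      have uM: "u \<notin> M" using cu uu by force
      have "orthonormal (insert u M)"
        unfolding orthonormal_def
      proof (intro conjI ballI impI)
        fix c assume "c \<in> insert u M"
        then show "ip c c = 1" using uu oM unfolding orthonormal_def by auto
      next
        fix c d assume "c \<in> insert u M" "d \<in> insert u M" "c \<noteq> d"
        then show "ip c d = 0" using cu uc oM unfolding orthonormal_def by auto
      qed
      then have "insert u M \<in> A" using SM unfolding A_def by auto
      then have "insert u M = M" using max by blast
      then show False using uM by blast
    qed
  qed
  then show ?thesis using SM by blast
qed

lemma gram_schmidt3:
  assumes "dim_gt_2 smul"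
  shows "\<exists>e1 e2 e3. orthonormal {e1, e2, e3} \<and> e1 \<noteq> e2 \<and> e1 \<noteq> e3 \<and> e2 \<noteq> e3"
proof -
  obtain u v w where ind: "\<And>a b c. smul a u + smul b v + smul c w = 0 \<Longrightarrow> a = 0 \<and> b = 0 \<and> c = 0"
    using assms unfolding dim_gt_2_def by blast
  have u0: "u \<noteq> 0" using ind[of 1 0 0] by auto
  have uu: "ip u u \<noteq> 0" using u0 by simp
  define \<alpha> where "\<alpha> = ip u v / ip u u"
  define v' where "v' = v - smul \<alpha> u"
  have v'0: "v' \<noteq> 0"
  proof
    assume "v' = 0"
    then have "smul (- \<alpha>) u + smul 1 v + smul 0 w = 0"
      unfolding v'_def by (simp add: smul_minus_left)
    from ind[OF this] show False by simp
  qed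
  have uv': "ip u v' = 0" unfolding v'_def \<alpha>_def using uu by (simp add: ip_diff_right)
  have vv: "ip v' v' \<noteq> 0" using v'0 by simp
  define \<beta> where "\<beta> = ip u w / ip u u"
  define \<gamma> where "\<gamma> = ip v' w / ip v' v'"
  define w' where "w' = w - smul \<beta> u - smul \<gamma> v'"
  have w'0: "w' \<noteq> 0"
  proof
    assume "w' = 0"
    have "w' = smul (\<gamma> * \<alpha> - \<beta>) u + smul (- \<gamma>) v + smul 1 w"
      unfolding w'_def v'_def
      by (simp add: smul_diff_right smul_mult[symmetric] smul_diff_left smul_minus_left algebra_simps)
    then have "smul (\<gamma> * \<alpha> - \<beta>) u + smul (- \<gamma>) v + smul 1 w = 0" using \<open>w' = 0\<close> by simp
    from ind[OF this] show False by simp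
  qed
  have v'u: "ip v' u = 0" using uv' ip_conj[of v' u] by simp
  have uw': "ip u w' = 0" unfolding w'_def \<beta>_def using uu uv' by (simp add: ip_diff_right)
  have v'w': "ip v' w' = 0" unfolding w'_def \<gamma>_def using vv v'u by (simp add: ip_diff_right)
  define e1 e2 e3 where "e1 = nz u" and "e2 = nz v'" and "e3 = nz w'"
  have o12: "ip e1 e2 = 0" unfolding e1_def e2_def ip_nz_left ip_nz_right using uv' by simp
  have o13: "ip e1 e3 = 0" unfolding e1_def e3_def ip_nz_left ip_nz_right using uw' by simp
  have o23: "ip e2 e3 = 0" unfolding e2_def e3_def ip_nz_left ip_nz_right using v'w' by simp
  have o21: "ip e2 e1 = 0" using o12 ip_conj[of e2 e1] by simp
  have o31: "ip e3 e1 = 0" using o13 ip_conj[of e3 e1] by simp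
  have o32: "ip e3 e2 = 0" using o23 ip_conj[of e3 e2] by simp
  have n1: "ip e1 e1 = 1" unfolding e1_def by (rule ip_nz_self[OF u0])
  have n2: "ip e2 e2 = 1" unfolding e2_def by (rule ip_nz_self[OF v'0])
  have n3: "ip e3 e3 = 1" unfolding e3_def by (rule ip_nz_self[OF w'0])
  have d: "e1 \<noteq> e2" "e1 \<noteq> e3" "e2 \<noteq> e3" using o12 o13 o23 n1 n2 by auto
  have "orthonormal {e1, e2, e3}"
    unfolding orthonormal_def using o12 o13 o23 o21 o31 o32 n1 n2 n3 by auto
  then show ?thesis using d by blast
qed

end

context sect begin

lemma orth_UNIV: "orth ip UNIV = {0}"
proof -
  have "x = 0" if "\<forall>y. ip y x = 0" for x
    using that[rule_format, of x] by simp
  then show ?thesis unfolding orth_def by auto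
qed

lemma main_false:
  assumes dim: "dim_gt_2 smul"
  shows False
proof -
  obtain e1 e2 e3 where o3: "orthonormal {e1, e2, e3}" and d: "e1 \<noteq> e2" "e1 \<noteq> e3" "e2 \<noteq> e3"
    using gram_schmidt3[OF dim] by blast
  obtain B where SB: "{e1, e2, e3} \<subseteq> B" and cB: "complete_on B"
    using exists_complete[OF o3] by blast
  show False
  proof (cases "finite B")
    case True
    have "\<exists>i\<in>B. val (Sset B id {i})"
      by (rule exactly_one(1)[OF cB True]) simp
    then obtain b1 where b1: "b1 \<in> B" "val (Sset B id {b1})" by blast
    obtain b2 b3 where b23: "b2 \<in> B" "b3 \<in> B" "b1 \<noteq> b2" "b1 \<noteq> b3" "b2 \<noteq> b3"
    proof -
      consider "b1 = e1" | "b1 = e2" | "b1 \<noteq> e1 \<and> b1 \<noteq> e2" by blast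
      then show ?thesis
      proof cases
        case 1 then show ?thesis using that[of e2 e3] SB d by auto
      next
        case 2 then show ?thesis using that[of e1 e3] SB d by auto
      next
        case 3 then show ?thesis using that[of e1 e2] SB d by auto
      qed
    qed
    define \<kappa>0 :: "'a \<Rightarrow> nat" where
      "\<kappa>0 y = (if y = b1 then 1 else if y = b2 then 2 else if y = b3 then 3 else 0)" for y
    define R where "R = B - {b1, b2, b3}"
    have kI: "\<kappa>0 y \<in> {0,1,2,3}" for y unfolding \<kappa>0_def by auto
    have s1: "Sset B \<kappa>0 {1} = Sset B id {b1}"
      unfolding Sset_def \<kappa>0_def by (rule arg_cong[of _ _ "orth ip"]) auto
    have s0: "Sset B \<kappa>0 {0} = orth ip (orth ip R)"
    proof -
      have "Sset B \<kappa>0 {0} = orth ip {c\<in>B. \<not> (\<kappa>0 c = 0)}" unfolding Sset_def by simp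
      also have "\<dots> = orth ip (orth ip {c\<in>B. \<kappa>0 c = 0})" using orth_orth_Q[OF cB, of "\<lambda>c. \<kappa>0 c = 0"] by simp
      also have "{c\<in>B. \<kappa>0 c = 0} = R" unfolding R_def \<kappa>0_def using b23 by auto
      finally show ?thesis .
    qed
    have Rf: "\<not> val (orth ip (orth ip R))"
      using exactly_one(2)[OF cB, of "{0,1,2,3}" \<kappa>0 1 0] kI b1(2) s1 s0 by auto
    define e where "e \<beta> j = (if j = 1 then b1 else if j = 2 then b2 else b3)" for \<beta> :: 'a and j :: nat
    interpret kssetup smul ip \<tau> B "{b1}" e R
    proof
      show "complete_on B" by (rule cB)
      show "\<And>\<beta> j. \<beta> \<in> {b1} \<Longrightarrow> j \<in> {1, 2, 3} \<Longrightarrow> e \<beta> j \<in> B"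
        unfolding e_def using b1 b23 by auto
      show "\<And>\<beta> \<beta>' j j'. \<beta> \<in> {b1} \<Longrightarrow> \<beta>' \<in> {b1} \<Longrightarrow> j \<in> {1, 2, 3} \<Longrightarrow> j' \<in> {1, 2, 3} \<Longrightarrow>
                 e \<beta> j = e \<beta>' j' \<Longrightarrow> \<beta> = \<beta>' \<and> j = j'"
        unfolding e_def using b23 by auto
      show "R = B - {e \<beta> j |\<beta> j. \<beta> \<in> {b1} \<and> j \<in> {1, 2, 3}}"
        unfolding R_def e_def by (auto, force+)
      show "\<not> val (orth ip (orth ip R))" by (rule Rf)
    qed
    show False by (rule ks_contradiction)
  next
    case False
    obtain h where h: "bij_betw h (B \<times> {1,2,3::nat}) B" using inf_bij3[OF False] by blast
    define e where "e \<beta> j = h (\<beta>, j)" for \<beta> :: 'a and j :: nat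
    interpret kssetup smul ip \<tau> B B e "{}"
    proof
      show "complete_on B" by (rule cB)
      show "\<And>\<beta> j. \<beta> \<in> B \<Longrightarrow> j \<in> {1, 2, 3} \<Longrightarrow> e \<beta> j \<in> B"
        unfolding e_def using h bij_betw_apply by fastforce
      show "\<And>\<beta> \<beta>' j j'. \<beta> \<in> B \<Longrightarrow> \<beta>' \<in> B \<Longrightarrow> j \<in> {1, 2, 3} \<Longrightarrow> j' \<in> {1, 2, 3} \<Longrightarrow>
                 e \<beta> j = e \<beta>' j' \<Longrightarrow> \<beta> = \<beta>' \<and> j = j'"
        unfolding e_def using h unfolding bij_betw_def inj_on_def by blast
      have "B \<subseteq> {e \<beta> j |\<beta> j. \<beta> \<in> B \<and> j \<in> {1, 2, 3}}"
      proof
        fix b assume "b \<in> B"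
        then have "b \<in> h ` (B \<times> {1,2,3::nat})" using h unfolding bij_betw_def by simp
        then obtain p where "p \<in> B \<times> {1,2,3::nat}" "b = h p" by (rule imageE) simp
        then show "b \<in> {e \<beta> j |\<beta> j. \<beta> \<in> B \<and> j \<in> {1, 2, 3}}" unfolding e_def by auto
      qed
      then show "{} = B - {e \<beta> j |\<beta> j. \<beta> \<in> B \<and> j \<in> {1, 2, 3}}" by auto
      show "\<not> val (orth ip (orth ip {}))"
        using val_zero[OF cB] orth_UNIV by (simp add: orth_def)
    qed
    show False by (rule ks_contradiction)
  qed
qed

end

theorem theorem4p3:
  fixes smul :: "complex \<Rightarrow> 'a::{real_normed_vector, complete_space} \<Rightarrow> 'a"
    and ip :: "'a \<Rightarrow> 'a \<Rightarrow> complex"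
  assumes "complex_hilbert smul ip"
    and "dim_gt_2 smul"
  shows "\<not> (\<exists>\<tau>. continuous_map (downset_topology (bool_subalgebras smul ip) (\<subseteq>))
                               (downset_topology (spectral_E smul ip) sheaf_le) \<tau>
              \<and> (\<forall>W\<in>bool_subalgebras smul ip. fst (\<tau> W) = W))"
proof
  assume "\<exists>\<tau>. continuous_map (downset_topology (bool_subalgebras smul ip) (\<subseteq>))
                               (downset_topology (spectral_E smul ip) sheaf_le) \<tau>
              \<and> (\<forall>W\<in>bool_subalgebras smul ip. fst (\<tau> W) = W)"
  then obtain \<tau> where c: "continuous_map (downset_topology (bool_subalgebras smul ip) (\<subseteq>))
                               (downset_topology (spectral_E smul ip) sheaf_le) \<tau>"
    and s: "\<forall>W\<in>bool_subalgebras smul ip. fst (\<tau> W) = W" by blast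
  interpret sect smul ip \<tau>
    by unfold_locales (rule assms(1), rule c, rule s)
  show False by (rule main_false[OF assms(2)])
qed

end
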